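(* Let $(X,\mathcal{B},\mu)$ be a standard $\sigma$-finite measure space. Let $\alpha,\beta,\mathcal{C}$ be sub-$\sigma$-algebras of $\mathcal{B}$. Assume that $\mathcal{C}$ is $\sigma$-finite (i.e. $\mu|_{\mathcal{C}}$ is $\sigma$-finite) and non-atomic. Then $$(\mathcal{C}\vee\alpha\vee\beta)^{*}=(\mathcal{C}\vee\alpha)^{*}\vee(\mathcal{C}\vee\beta)^{*}\quad\text{modulo }\mu^{*}.$$
   Context: Poisson suspension of $(X,\mathcal{B},\mu)$: $X^*$ is the space of (counting) measures $\gamma$ on $X$; $\mathcal{B}^*$ is the $\sigma$-algebra generated by the maps $N(B):\gamma\mapsto\gamma(B)$, $B\in\mathcal{B}$. The measure $\mu^*$ is the unique probability measure on $(X^*,\mathcal{B}^* )$ such that, for pairwise disjoint $B_1,\dots,B_k\in\mathcal{B}$, the random variables $N(B_1),\dots,N(B_k)$ are independent. Moreover, each $N(B)$ is Poisson distributed with parameter $\mu(B)$, with $N(B)=\infty$ a.s. if $\mu(B)=\infty$. For a sub-$\sigma$-algebra $\mathcal{C}\subset\mathcal{B}$, $\mathcal{C}^*:=\sigma(\{N(A):A\in\mathcal{C}\})$. *)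

theory Defs
  imports "HOL-Probability.Probability"
begin

definition Xstar :: "'a measure \<Rightarrow> ('a set \<Rightarrow> ennreal) set" where
  "Xstar M = {\<gamma>. measure_space (space M) (sets M) \<gamma> \<and>
                 (\<forall>A\<in>sets M. \<gamma> A = \<infinity> \<or> (\<exists>n::nat. \<gamma> A = of_nat n))}"

definition susp_alg :: "'a measure \<Rightarrow> 'a set set \<Rightarrow> ('a set \<Rightarrow> ennreal) set set" where
  "susp_alg M Cs = sigma_sets (Xstar M)
     {{\<gamma> \<in> Xstar M. \<gamma> A \<in> S} | A S. A \<in> Cs \<and> S \<in> sets (borel :: ennreal measure)}"

definition is_poisson_suspension :: "'a measure \<Rightarrow> ('a set \<Rightarrow> ennreal) measure \<Rightarrow> bool" where
  "is_poisson_suspension M P \<longleftrightarrow>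
     prob_space P \<and> space P = Xstar M \<and> sets P = susp_alg M (sets M) \<and>
     (\<forall>I. finite I \<longrightarrow> I \<subseteq> sets M \<longrightarrow> disjoint I \<longrightarrow>
          prob_space.indep_vars P (\<lambda>_. borel) (\<lambda>A \<gamma>. \<gamma> A) I) \<and>
     (\<forall>A\<in>sets M. emeasure M A < \<infinity> \<longrightarrow> (\<forall>n::nat.
          measure P {\<gamma> \<in> space P. \<gamma> A = of_nat n} =
            measure M A ^ n / fact n * exp (- measure M A))) \<and>
     (\<forall>A\<in>sets M. emeasure M A = \<infinity> \<longrightarrow> (AE \<gamma> in P. \<gamma> A = \<infinity>))"

definition join_alg :: "'a measure \<Rightarrow> 'a set set \<Rightarrow> 'a set set \<Rightarrow> 'a set set" where
  "join_alg M F G = sigma_sets (space M) (F \<union> G)"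

definition join_alg_star :: "'b set \<Rightarrow> 'b set set \<Rightarrow> 'b set set \<Rightarrow> 'b set set" where
  "join_alg_star \<Omega> F G = sigma_sets \<Omega> (F \<union> G)"

definition sub_sigma_algebra_of :: "'a measure \<Rightarrow> 'a set set \<Rightarrow> bool" where
  "sub_sigma_algebra_of M F \<longleftrightarrow> sigma_algebra (space M) F \<and> F \<subseteq> sets M"

definition sigma_finite_on :: "'a measure \<Rightarrow> 'a set set \<Rightarrow> bool" where
  "sigma_finite_on M F \<longleftrightarrow> (\<exists>A. countable A \<and> A \<subseteq> F \<and> \<Union>A = space M \<and>
                                  (\<forall>a\<in>A. emeasure M a \<noteq> \<infinity>))"

definition non_atomic_on :: "'a measure \<Rightarrow> 'a set set \<Rightarrow> bool" where
  "non_atomic_on M F \<longleftrightarrow> (\<forall>A\<in>F. 0 < emeasure M A \<longrightarrow>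
       (\<exists>B\<in>F. B \<subseteq> A \<and> 0 < emeasure M B \<and> emeasure M B < emeasure M A))"

definition eq_mod :: "'b measure \<Rightarrow> 'b set set \<Rightarrow> 'b set set \<Rightarrow> bool" where
  "eq_mod P F G \<longleftrightarrow>
     (\<forall>A\<in>F. \<exists>B\<in>G. (A - B) \<union> (B - A) \<in> null_sets P) \<and>
     (\<forall>B\<in>G. \<exists>A\<in>F. (A - B) \<union> (B - A) \<in> null_sets P)"

end

theory Submission
  imports Defs
begin



lemma halve_set:
  assumes sa: "sigma_algebra (space M) C" and CM: "C \<subseteq> sets M" and na: "non_atomic_on M C"
    and Y: "Y \<in> C" "0 < measure M Y" "emeasure M Y \<noteq> \<infinity>"
  shows "\<exists>Z\<in>C. Z \<subseteq> Y \<and> 0 < measure M Z \<and> measure M Z \<le> measure M Y / 2"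
proof -
  interpret sigma_algebra "space M" C by fact
  have YM: "Y \<in> sets M" using Y CM by auto
  have "0 < emeasure M Y" using Y emeasure_eq_ennreal_measure[of M Y] by auto
  then obtain B where B: "B \<in> C" "B \<subseteq> Y" "0 < emeasure M B" "emeasure M B < emeasure M Y"
    using na Y unfolding non_atomic_on_def by blast
  have BM: "B \<in> sets M" using B CM by auto
  have Bfin: "emeasure M B \<noteq> \<infinity>" using Y(3) B(4) neq_top_trans[of "emeasure M Y" "emeasure M B"] by simp
  have mB: "0 < measure M B" "measure M B < measure M Y"
    using B Bfin Y emeasure_eq_ennreal_measure[of M B] emeasure_eq_ennreal_measure[of M Y]
    by (auto simp: ennreal_less_iff)
  have mD: "measure M (Y - B) = measure M Y - measure M B"
    using measure_Diff[OF Y(3) YM BM B(2)] .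
  show ?thesis
  proof (cases "measure M B \<le> measure M Y / 2")
    case True then show ?thesis using B mB by blast
  next
    case False
    have "Y - B \<in> C" using Y B by auto
    then show ?thesis using mD mB False by (intro bexI[of _ "Y - B"]) auto
  qed
qed

lemma small_subset:
  assumes sa: "sigma_algebra (space M) C" and CM: "C \<subseteq> sets M" and na: "non_atomic_on M C"
    and X: "X \<in> C" "0 < measure M X" "emeasure M X \<noteq> \<infinity>" and d: "0 < d"
  shows "\<exists>Y\<in>C. Y \<subseteq> X \<and> 0 < measure M Y \<and> measure M Y \<le> d"
proof -
  have XM: "X \<in> sets M" using X CM by auto
  have k: "\<exists>Z\<in>C. Z \<subseteq> X \<and> 0 < measure M Z \<and> measure M Z \<le> measure M X / 2^k" for k
  proof (induction k)
    case 0 then show ?case using X by auto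
  next
    case (Suc k)
    then obtain Z where Z: "Z \<in> C" "Z \<subseteq> X" "0 < measure M Z" "measure M Z \<le> measure M X / 2^k" by blast
    have "emeasure M Z \<le> emeasure M X" using Z CM XM by (intro emeasure_mono) auto
    then have "emeasure M Z \<noteq> \<infinity>" using X(3) neq_top_trans[of "emeasure M X" "emeasure M Z"] by simp
    from halve_set[OF sa CM na Z(1) Z(3) this] obtain W where
      W: "W \<in> C" "W \<subseteq> Z" "0 < measure M W" "measure M W \<le> measure M Z / 2" by blast
    have "measure M Z / 2 \<le> measure M X / 2^k / 2" using Z(4) by (simp add: divide_right_mono)
    moreover have "measure M X / 2^k / 2 = measure M X / 2^Suc k" by simp
    ultimately have "measure M W \<le> measure M X / 2^Suc k" using W(4) by linarith
    moreover have "W \<subseteq> X" using W(2) Z(2) by blast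
    ultimately show ?case using W(1,3) by blast
  qed
  obtain k where "measure M X / d < 2 ^ k" using real_arch_pow[of 2 "measure M X / d"] by auto
  then have "measure M X < d * 2^k" using d by (simp add: divide_less_eq mult.commute)
  then have "measure M X / 2^k < d" by (simp add: divide_less_eq)
  moreover obtain Z where "Z \<in> C" "Z \<subseteq> X" "0 < measure M Z" "measure M Z \<le> measure M X / 2^k"
    using k[of k] by blast
  ultimately show ?thesis by (intro bexI[of _ Z]) auto
qed




lemma partition_small:
  assumes sa: "sigma_algebra (space M) C" and CM: "C \<subseteq> sets M" and na: "non_atomic_on M C"
    and F: "F \<in> C" "emeasure M F \<noteq> \<infinity>" and d: "0 < d"
  shows "\<exists>Q::nat \<Rightarrow> 'a set. (\<forall>i. Q i \<in> C) \<and> disjoint_family Q \<and> (\<Union>i. Q i) = F \<and>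
            (\<forall>i. measure M (Q i) \<le> d)"
proof -
  interpret sigma_algebra "space M" C by fact
  define cand where "cand R = {Y. Y \<in> C \<and> Y \<subseteq> R \<and> measure M Y \<le> d}" for R
  define s where "s R = Sup (measure M ` cand R)" for R
  have cand_ne: "{} \<in> cand R" for R using d unfolding cand_def by auto
  have bdd: "bdd_above (measure M ` cand R)" for R unfolding cand_def by (auto intro!: bdd_aboveI[of _ d])
  have s_ge: "measure M Y \<le> s R" if "Y \<in> cand R" for Y R
    unfolding s_def using that bdd by (intro cSup_upper) auto
  have s_nn: "0 \<le> s R" for R using s_ge[OF cand_ne] by simp
  have ex: "\<exists>Y. Y \<in> cand R \<and> s R \<le> 2 * measure M Y" for R
  proof (cases "s R = 0")
    case True then show ?thesis using cand_ne by auto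
  next
    case False
    then have "s R / 2 < s R" using s_nn[of R] by auto
    then obtain Y where "Y \<in> cand R" "s R / 2 < measure M Y"
      unfolding s_def[of R] using cand_ne[of R] by (subst (asm) less_cSup_iff) (auto intro: bdd)
    then show ?thesis by (intro exI[of _ Y]) auto
  qed
  define pick where "pick R = (SOME Y. Y \<in> cand R \<and> s R \<le> 2 * measure M Y)" for R
  have pick: "pick R \<in> cand R" "s R \<le> 2 * measure M (pick R)" for R
    using someI_ex[OF ex[of R]] unfolding pick_def by auto
  define Rs where "Rs n = ((\<lambda>X. X - pick X) ^^ n) F" for n
  have Rs0: "Rs 0 = F" and RsS: "Rs (Suc n) = Rs n - pick (Rs n)" for n unfolding Rs_def by auto
  define Pc where "Pc n = pick (Rs n)" for n
  have Pc_C: "Pc n \<in> C" and Pc_sub: "Pc n \<subseteq> Rs n" for n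
    using pick(1)[of "Rs n"] unfolding Pc_def cand_def by auto
  have Rs_C: "Rs n \<in> C" for n
    by (induction n) (auto simp: Rs0 RsS F Pc_C[unfolded Pc_def])
  have Rs_dec: "Rs n \<subseteq> Rs m" if "m \<le> n" for m n
    using that
  proof (induction n)
    case 0 then show ?case by simp
  next
    case (Suc n) then show ?case by (cases "m = Suc n") (auto simp: RsS)
  qed
  have Rs_F: "Rs n \<subseteq> F" for n using Rs_dec[of 0 n] Rs0 by auto
  have disj0: "Pc m \<inter> Pc n = {}" if "n < m" for m n
  proof -
    have "Pc m \<subseteq> Rs (Suc n)" using Pc_sub[of m] Rs_dec[of "Suc n" m] that by auto
    then show ?thesis by (auto simp: RsS Pc_def)
  qed
  have disj: "disjoint_family Pc"
    unfolding disjoint_family_on_def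
  proof (intro ballI impI)
    fix m n :: nat assume "m \<noteq> n"
    then show "Pc m \<inter> Pc n = {}" using disj0[of n m] disj0[of m n] by (cases "n < m") auto
  qed
  have PcM: "range Pc \<subseteq> sets M" using Pc_C CM by auto
  have FM: "F \<in> sets M" using F CM by auto
  have UPc_F: "(\<Union>n. Pc n) \<subseteq> F" using Pc_sub Rs_F by blast
  have UPc_fin: "emeasure M (\<Union>n. Pc n) \<noteq> \<infinity>"
    using F(2) emeasure_mono[OF UPc_F FM] neq_top_trans[of "emeasure M F"] by simp
  have "(\<lambda>n. measure M (Pc n)) sums measure M (\<Union>n. Pc n)"
    by (rule measure_UNION[OF PcM disj UPc_fin])
  then have "(\<lambda>n. measure M (Pc n)) \<longlonglongrightarrow> 0" using summable_LIMSEQ_zero sums_summable by blast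
  define Rinf where "Rinf = F - (\<Union>n. Pc n)"
  have Rinf_C: "Rinf \<in> C" unfolding Rinf_def using F Pc_C by auto
  have Rinf_sub: "Rinf \<subseteq> Rs n" for n
  proof (induction n)
    case 0 then show ?case by (auto simp: Rs0 Rinf_def)
  next
    case (Suc n) then show ?case by (auto simp: RsS Rinf_def Pc_def)
  qed
  have Rinf_fin: "emeasure M Rinf \<noteq> \<infinity>"
    using F(2) emeasure_mono[of Rinf F] FM neq_top_trans[of "emeasure M F" "emeasure M Rinf"]
    unfolding Rinf_def by auto
  have Rinf0: "measure M Rinf = 0"
  proof (rule ccontr)
    assume "measure M Rinf \<noteq> 0"
    then have "0 < measure M Rinf" using measure_nonneg[of M Rinf] by linarith
    from small_subset[OF sa CM na Rinf_C this Rinf_fin d] obtain Y where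
      Y: "Y \<in> C" "Y \<subseteq> Rinf" "0 < measure M Y" "measure M Y \<le> d" by blast
    have "Y \<in> cand (Rs n)" for n using Y Rinf_sub[of n] unfolding cand_def by auto
    then have le: "measure M Y \<le> 2 * measure M (Pc n)" for n
      using s_ge pick(2)[of "Rs n"] unfolding Pc_def by (meson order.trans)
    have "(\<lambda>n. 2 * measure M (Pc n)) \<longlonglongrightarrow> 2 * 0"
      by (intro tendsto_mult tendsto_const) fact
    then have "measure M Y \<le> 2 * 0" by (rule LIMSEQ_le_const) (use le in auto)
    then show False using Y(3) by simp
  qed
  define Q where "Q i = (case i of 0 \<Rightarrow> Rinf | Suc n \<Rightarrow> Pc n)" for i
  have QC: "\<forall>i. Q i \<in> C"
  proof
    fix i show "Q i \<in> C" using Rinf_C Pc_C by (cases i) (simp_all add: Q_def)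
  qed
  have Qd: "disjoint_family Q"
    unfolding disjoint_family_on_def
  proof (intro ballI impI)
    fix i j :: nat assume ij: "i \<noteq> j"
    have dj: "Pc m \<inter> Pc n = {}" if "m \<noteq> n" for m n
      using disj that unfolding disjoint_family_on_def by blast
    show "Q i \<inter> Q j = {}"
    proof (cases i)
      case 0
      then obtain n where "j = Suc n" using ij by (cases j) auto
      then show ?thesis using 0 by (auto simp: Q_def Rinf_def)
    next
      case (Suc m)
      show ?thesis
      proof (cases j)
        case 0 then show ?thesis using Suc by (auto simp: Q_def Rinf_def)
      next
        case (Suc n) then show ?thesis using \<open>i = Suc m\<close> ij dj[of m n] by (simp add: Q_def)
      qed
    qed
  qed
  have QU: "(\<Union>i. Q i) = F"
  proof (intro equalityI subsetI)
    fix x assume "x \<in> (\<Union>i. Q i)" then obtain i where "x \<in> Q i" by blast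
    then show "x \<in> F" using UPc_F by (cases i) (auto simp: Q_def Rinf_def)
  next
    fix x assume xF: "x \<in> F"
    show "x \<in> (\<Union>i. Q i)"
    proof (cases "x \<in> (\<Union>n. Pc n)")
      case True then obtain n where "x \<in> Pc n" by blast
      then have "x \<in> Q (Suc n)" by (simp add: Q_def)
      then show ?thesis by blast
    next
      case False then have "x \<in> Q 0" using xF by (simp add: Q_def Rinf_def)
      then show ?thesis by blast
    qed
  qed
  have Qm: "\<forall>i. measure M (Q i) \<le> d"
  proof
    fix i show "measure M (Q i) \<le> d"
    proof (cases i)
      case 0 then show ?thesis using Rinf0 d by (simp add: Q_def)
    next
      case (Suc n) then show ?thesis using pick(1)[of "Rs n"] by (simp add: Q_def Pc_def cand_def)
    qed
  qed
  show ?thesis using QC Qd QU Qm by blast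
qed




lemma susp_alg_sub: "Cs \<subseteq> Ds \<Longrightarrow> susp_alg M Cs \<subseteq> susp_alg M Ds"
  unfolding susp_alg_def by (rule sigma_sets_subseteq) blast

lemma susp_alg_Pow: "susp_alg M Cs \<subseteq> Pow (Xstar M)"
  unfolding susp_alg_def
  using sigma_sets_into_sp[of "{{\<gamma> \<in> Xstar M. \<gamma> A \<in> S} |A S. A \<in> Cs \<and> S \<in> sets borel}" "Xstar M"]
  by auto

lemma susp_gen: "A \<in> Cs \<Longrightarrow> S \<in> sets borel \<Longrightarrow> {\<gamma> \<in> Xstar M. \<gamma> A \<in> S} \<in> susp_alg M Cs"
  unfolding susp_alg_def by (rule sigma_sets.Basic) blast

lemma Xstar_ms: "\<gamma> \<in> Xstar M \<Longrightarrow> measure_space (space M) (sets M) \<gamma>"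
  unfolding Xstar_def by auto

lemma Xstar_vals: "\<gamma> \<in> Xstar M \<Longrightarrow> A \<in> sets M \<Longrightarrow> \<gamma> A = \<infinity> \<or> (\<exists>n::nat. \<gamma> A = of_nat n)"
  unfolding Xstar_def by auto

definition Gm :: "'a measure \<Rightarrow> ('a set \<Rightarrow> ennreal) \<Rightarrow> 'a measure" where
  "Gm M \<gamma> = measure_of (space M) (sets M) \<gamma>"

lemma Gm_sets[simp]: "sets (Gm M \<gamma>) = sets M" and Gm_space[simp]: "space (Gm M \<gamma>) = space M"
  unfolding Gm_def by (auto simp: sets.sets_into_space)

lemma Gm_emeasure: "\<gamma> \<in> Xstar M \<Longrightarrow> A \<in> sets M \<Longrightarrow> emeasure (Gm M \<gamma>) A = \<gamma> A"
  unfolding Gm_def using Xstar_ms[of \<gamma> M]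
  by (intro emeasure_measure_of_sigma) (auto simp: measure_space_def)

locale PS =
  fixes M :: "'a measure" and P :: "('a set \<Rightarrow> ennreal) measure"
  assumes PS: "is_poisson_suspension M P"
begin

lemma prob: "prob_space P" using PS unfolding is_poisson_suspension_def by auto
lemma spP: "space P = Xstar M" using PS unfolding is_poisson_suspension_def by auto
lemma setsP: "sets P = susp_alg M (sets M)" using PS unfolding is_poisson_suspension_def by auto

lemma meas_set: "A \<in> sets M \<Longrightarrow> S \<in> sets borel \<Longrightarrow> {\<gamma> \<in> space P. \<gamma> A \<in> S} \<in> sets P"
  using susp_gen[of A "sets M" S M] by (simp add: spP setsP)

lemma meas_fun: "A \<in> sets M \<Longrightarrow> (\<lambda>\<gamma>. \<gamma> A) \<in> borel_measurable P"
proof (rule measurableI)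
  fix S :: "ennreal set" assume "A \<in> sets M" "S \<in> sets borel"
  then show "(\<lambda>\<gamma>. \<gamma> A) -` S \<inter> space P \<in> sets P"
    using meas_set[of A S] by (simp add: vimage_def Int_def conj_commute)
qed auto

lemma pois: "A \<in> sets M \<Longrightarrow> emeasure M A < \<infinity> \<Longrightarrow>
   measure P {\<gamma> \<in> space P. \<gamma> A = of_nat n} = measure M A ^ n / fact n * exp (- measure M A)"
  using PS unfolding is_poisson_suspension_def by auto

lemma AE_fin:
  assumes A: "A \<in> sets M" "emeasure M A \<noteq> \<infinity>"
  shows "AE \<gamma> in P. \<gamma> A \<noteq> \<infinity>"
proof -
  interpret prob_space P by (rule prob)
  define m where "m = measure M A"
  define E where "E n = {\<gamma> \<in> space P. \<gamma> A = of_nat n}" for n :: nat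
  have EP: "E n \<in> sets P" for n unfolding E_def using meas_set[OF A(1), of "{of_nat n}"] by simp
  have Ed: "disjoint_family E" unfolding disjoint_family_on_def E_def by auto
  have "(\<lambda>n. measure P (E n)) sums measure P (\<Union>n. E n)"
    using EP Ed by (intro measure_UNION) auto
  moreover have "(\<lambda>n. measure P (E n)) = (\<lambda>n. m ^ n / fact n * exp (- m))"
    using pois[OF A(1)] A(2) unfolding E_def m_def by (auto simp: less_top)
  moreover have "(\<lambda>n. m ^ n / fact n * exp (- m)) sums (exp m * exp (- m))"
    using sums_mult2[OF exp_converges[of m], of "exp (-m)"] by (simp add: divide_inverse mult.commute)
  ultimately have "(\<lambda>n. measure P (E n)) sums measure P (\<Union>n. E n)" "(\<lambda>n. measure P (E n)) sums 1"
    by (simp_all add: exp_minus_inverse)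
  then have "measure P (\<Union>n. E n) = 1" by (rule sums_unique2)
  then have "AE \<gamma> in P. \<gamma> \<in> (\<Union>n. E n)" by (rule AE_prob_1)
  then show ?thesis by eventually_elim (auto simp: E_def)
qed

lemma prob_ge2:
  assumes A: "A \<in> sets M" "emeasure M A \<noteq> \<infinity>"
  shows "measure P {\<gamma> \<in> space P. 1 < \<gamma> A} \<le> (measure M A)^2"
proof -
  interpret prob_space P by (rule prob)
  define m where "m = measure M A"
  have m0: "0 \<le> m" unfolding m_def by simp
  define E where "E n = {\<gamma> \<in> space P. \<gamma> A = of_nat n}" for n :: nat
  have EP: "E n \<in> sets P" for n unfolding E_def using meas_set[OF A(1), of "{of_nat n}"] by simp
  have pE: "measure P (E n) = m ^ n / fact n * exp (- m)" for n
    using pois[OF A(1)] A(2) unfolding E_def m_def by (auto simp: less_top)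
  have eq: "{\<gamma> \<in> space P. 1 < \<gamma> A} = space P - (E 0 \<union> E 1)"
  proof (intro equalityI subsetI)
    fix \<gamma> assume "\<gamma> \<in> {\<gamma> \<in> space P. 1 < \<gamma> A}"
    then show "\<gamma> \<in> space P - (E 0 \<union> E 1)" unfolding E_def by auto
  next
    fix \<gamma> assume g: "\<gamma> \<in> space P - (E 0 \<union> E 1)"
    then have "\<gamma> \<in> Xstar M" by (simp add: spP)
    from Xstar_vals[OF this A(1)] have "1 < \<gamma> A"
    proof
      assume "\<gamma> A = \<infinity>" then show ?thesis by simp
    next
      assume "\<exists>n::nat. \<gamma> A = of_nat n"
      then obtain n :: nat where n: "\<gamma> A = of_nat n" by blast
      have "n \<noteq> 0" "n \<noteq> 1" using g n unfolding E_def by auto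
      then have "1 < n" by linarith
      then show ?thesis using n by (simp add: ennreal_of_nat_eq_real_of_nat)
    qed
    then show "\<gamma> \<in> {\<gamma> \<in> space P. 1 < \<gamma> A}" using g by auto
  qed
  have "measure P {\<gamma> \<in> space P. 1 < \<gamma> A} = 1 - (measure P (E 0) + measure P (E 1))"
  proof -
    have E01: "E 0 \<union> E 1 \<in> sets P" using EP[of 0] EP[of 1] by blast
    have "measure P (E 0 \<union> E 1) = measure P (E 0) + measure P (E 1)"
      by (rule finite_measure_Union[OF EP EP]) (auto simp: E_def)
    then show ?thesis unfolding eq using prob_compl[OF E01] by simp
  qed
  also have "\<dots> = 1 - (exp (-m) + m * exp (-m))" using pE[of 0] pE[of 1] by simp
  also have "\<dots> \<le> m^2"
  proof -
    have "1 - m \<le> exp (-m)" using exp_ge_add_one_self[of "-m"] by simp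
    then have "(1 - m) * (1 + m) \<le> exp (-m) * (1 + m)" using m0 by (intro mult_right_mono) auto
    moreover have "(1 - m) * (1 + m) = 1 - m^2" by (simp add: algebra_simps power2_eq_square)
    moreover have "exp (-m) * (1 + m) = exp (-m) + m * exp (-m)" by (simp add: algebra_simps)
    ultimately show ?thesis by linarith
  qed
  finally show ?thesis unfolding m_def .
qed

end



definition aem :: "'b measure \<Rightarrow> 'b measure \<Rightarrow> ('b \<Rightarrow> ennreal) \<Rightarrow> bool" where
  "aem P N f \<longleftrightarrow> (\<exists>g \<in> borel_measurable N. AE x in P. f x = g x)"

lemma aem_meas: "f \<in> borel_measurable N \<Longrightarrow> aem P N f"
  unfolding aem_def by auto

lemma aem_cong:
  assumes "aem P N f" "AE x in P. f x = h x"
  shows "aem P N h"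
proof -
  obtain g where g: "g \<in> borel_measurable N" "AE x in P. f x = g x" using assms(1) unfolding aem_def by blast
  have "AE x in P. h x = g x" using assms(2) g(2) by eventually_elim simp
  then show ?thesis using g(1) unfolding aem_def by blast
qed

lemma aem_suminf:
  assumes "\<And>i::nat. aem P N (f i)"
  shows "aem P N (\<lambda>x. \<Sum>i. f i x)"
proof -
  from assms have "\<forall>i. \<exists>g. g \<in> borel_measurable N \<and> (AE x in P. f i x = g x)"
    unfolding aem_def by blast
  from choice[OF this] obtain g where g': "\<forall>i. g i \<in> borel_measurable N \<and> (AE x in P. f i x = g i x)"
    by blast
  then have g: "\<And>i. g i \<in> borel_measurable N" "\<And>i. AE x in P. f i x = g i x" by auto
  have "AE x in P. \<forall>i. f i x = g i x" using g(2) by (simp add: AE_all_countable)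
  then have "AE x in P. (\<Sum>i. f i x) = (\<Sum>i. g i x)" by eventually_elim simp
  moreover have "(\<lambda>x. \<Sum>i. g i x) \<in> borel_measurable N" by (rule borel_measurable_suminf_order[OF g(1)])
  ultimately show ?thesis unfolding aem_def by (intro bexI[of _ "\<lambda>x. \<Sum>i. g i x"])
qed

lemma aem_diff:
  assumes "aem P N f" "aem P N h"
  shows "aem P N (\<lambda>x. f x - h x)"
proof -
  obtain g1 where g1: "g1 \<in> borel_measurable N" "AE x in P. f x = g1 x" using assms(1) unfolding aem_def by blast
  obtain g2 where g2: "g2 \<in> borel_measurable N" "AE x in P. h x = g2 x" using assms(2) unfolding aem_def by blast
  have "(\<lambda>x. g1 x - g2 x) \<in> borel_measurable N" by (rule borel_measurable_minus_ennreal[OF g1(1) g2(1)])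
  moreover have "AE x in P. f x - h x = g1 x - g2 x" using g1(2) g2(2) by eventually_elim simp
  ultimately show ?thesis unfolding aem_def by (intro bexI[of _ "\<lambda>x. g1 x - g2 x"])
qed

lemma aem_ev:
  assumes h: "\<And>n::nat. h n \<in> borel_measurable N"
    and ev: "AE x in P. eventually (\<lambda>n. h n x = f x) sequentially"
  shows "aem P N f"
proof -
  have "(\<lambda>x. liminf (\<lambda>n. h n x)) \<in> borel_measurable N" by (rule borel_measurable_liminf[OF h])
  moreover have "AE x in P. f x = liminf (\<lambda>n. h n x)"
    using ev
  proof eventually_elim
    case (elim x)
    then have "(\<lambda>n. h n x) \<longlonglongrightarrow> f x" by (rule tendsto_eventually)
    then show ?case by (simp add: lim_imp_Liminf)
  qed
  ultimately show ?thesis unfolding aem_def by (intro bexI[of _ "\<lambda>x. liminf (\<lambda>n. h n x)"])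
qed

lemma gam_suminf:
  assumes "\<gamma> \<in> Xstar M" "range A \<subseteq> sets M" "disjoint_family A"
  shows "(\<Sum>i. \<gamma> (A i)) = \<gamma> (\<Union>i. A i)"
proof -
  have "(\<Sum>i. emeasure (Gm M \<gamma>) (A i)) = emeasure (Gm M \<gamma>) (\<Union>i. A i)"
    using assms by (intro suminf_emeasure) auto
  moreover have "(\<Union>i. A i) \<in> sets M" using assms(2) by auto
  ultimately show ?thesis using assms Gm_emeasure[of \<gamma> M] by auto
qed

lemma gam_empty: "\<gamma> \<in> Xstar M \<Longrightarrow> \<gamma> {} = 0"
  using Gm_emeasure[of \<gamma> M "{}"] by simp

lemma gam_mono: "\<gamma> \<in> Xstar M \<Longrightarrow> A \<in> sets M \<Longrightarrow> B \<in> sets M \<Longrightarrow> A \<subseteq> B \<Longrightarrow> \<gamma> A \<le> \<gamma> B"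
  using Gm_emeasure[of \<gamma> M A] Gm_emeasure[of \<gamma> M B] emeasure_mono[of A B "Gm M \<gamma>"] by simp

lemma gam_add: "\<gamma> \<in> Xstar M \<Longrightarrow> A \<in> sets M \<Longrightarrow> B \<in> sets M \<Longrightarrow> A \<inter> B = {} \<Longrightarrow> \<gamma> A + \<gamma> B = \<gamma> (A \<union> B)"
  using Gm_emeasure[of \<gamma> M A] Gm_emeasure[of \<gamma> M B] Gm_emeasure[of \<gamma> M "A \<union> B"]
    plus_emeasure[of A "Gm M \<gamma>" B] by simp

lemma gam_01:
  assumes g: "\<gamma> \<in> Xstar M" and Y: "Y \<in> sets M" "X \<in> sets M" "Y \<subseteq> X" and X1: "\<gamma> X \<le> 1"
  shows "\<gamma> Y = 0 \<or> \<gamma> Y = 1"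
proof -
  have le: "\<gamma> Y \<le> 1" using gam_mono[OF g Y] X1 by simp
  from Xstar_vals[OF g Y(1)] show ?thesis
  proof
    assume "\<gamma> Y = \<infinity>" then show ?thesis using le by (simp add: top_unique)
  next
    assume "\<exists>n::nat. \<gamma> Y = of_nat n"
    then obtain n :: nat where n: "\<gamma> Y = of_nat n" by blast
    then have "n \<le> 1" using le by (simp add: ennreal_of_nat_eq_real_of_nat)
    then have "n = 0 \<or> n = 1" by linarith
    then show ?thesis using n by auto
  qed
qed

lemma gam_min:
  assumes g: "\<gamma> \<in> Xstar M" and S: "X \<in> sets M" "a \<in> sets M" "b \<in> sets M" and X1: "\<gamma> X \<le> 1"
  shows "\<gamma> (X \<inter> a \<inter> b) = min (\<gamma> (X \<inter> a)) (\<gamma> (X \<inter> b))"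
proof -
  have v: "\<gamma> Y = 0 \<or> \<gamma> Y = 1" if "Y \<in> sets M" "Y \<subseteq> X" for Y using gam_01[OF g that(1) S(1) that(2) X1] .
  have m1: "\<gamma> (X \<inter> a \<inter> b) \<le> \<gamma> (X \<inter> a)" "\<gamma> (X \<inter> a \<inter> b) \<le> \<gamma> (X \<inter> b)"
    using S by (auto intro!: gam_mono[OF g])
  consider "\<gamma> (X \<inter> a) = 0" | "\<gamma> (X \<inter> b) = 0" | "\<gamma> (X \<inter> a) = 1" "\<gamma> (X \<inter> b) = 1"
    using v[of "X \<inter> a"] v[of "X \<inter> b"] S by auto
  then show ?thesis
  proof cases
    case 1 then show ?thesis using m1 by simp
  next
    case 2 then show ?thesis using m1 by simp
  next
    case 3
    have "\<gamma> (X \<inter> a \<inter> b) = 1"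
    proof (rule ccontr)
      assume "\<gamma> (X \<inter> a \<inter> b) \<noteq> 1"
      then have z: "\<gamma> (X \<inter> a \<inter> b) = 0" using v[of "X \<inter> a \<inter> b"] S by auto
      have un: "X \<inter> a \<inter> b \<union> (X \<inter> a - b) = X \<inter> a" by blast
      have "\<gamma> (X \<inter> a \<inter> b) + \<gamma> (X \<inter> a - b) = \<gamma> (X \<inter> a)"
        using gam_add[OF g, of "X \<inter> a \<inter> b" "X \<inter> a - b"] S unfolding un by auto
      then have d1: "\<gamma> (X \<inter> a - b) = 1" using z 3 by simp
      have "\<gamma> (X \<inter> a - b) + \<gamma> (X \<inter> b) = \<gamma> ((X \<inter> a - b) \<union> (X \<inter> b))"
        using gam_add[OF g, of "X \<inter> a - b" "X \<inter> b"] S by auto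
      also have "\<dots> \<le> \<gamma> X" using S by (intro gam_mono[OF g]) auto
      finally have le: "\<gamma> (X \<inter> a - b) + \<gamma> (X \<inter> b) \<le> \<gamma> X" .
      have "(1::ennreal) + 1 \<le> 1" using order.trans[OF le X1] d1 3(2) by simp
      then show False by simp
    qed
    then show ?thesis using 3 by simp
  qed
qed




locale PS2 = PS M P for M :: "'a measure" and P :: "('a set \<Rightarrow> ennreal) measure" +
  fixes C \<alpha> \<beta> :: "'a set set"
  assumes sa: "sub_sigma_algebra_of M \<alpha>" and sb: "sub_sigma_algebra_of M \<beta>" and sc: "sub_sigma_algebra_of M C"
    and sfin: "sigma_finite_on M C" and nat: "non_atomic_on M C"
begin

definition "CA = join_alg M C \<alpha>"
definition "CB = join_alg M C \<beta>"
definition "RM = sigma (Xstar M) (susp_alg M CA \<union> susp_alg M CB)"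

lemma saC: "sigma_algebra (space M) C" "C \<subseteq> sets M" using sc unfolding sub_sigma_algebra_of_def by auto
lemma saA: "sigma_algebra (space M) \<alpha>" "\<alpha> \<subseteq> sets M" using sa unfolding sub_sigma_algebra_of_def by auto
lemma saB: "sigma_algebra (space M) \<beta>" "\<beta> \<subseteq> sets M" using sb unfolding sub_sigma_algebra_of_def by auto

lemma CA_sub: "CA \<subseteq> sets M" unfolding CA_def join_alg_def
  using saC saA by (intro sets.sigma_sets_subset) auto
lemma CB_sub: "CB \<subseteq> sets M" unfolding CB_def join_alg_def
  using saC saB by (intro sets.sigma_sets_subset) auto
lemma CA_sa: "sigma_algebra (space M) CA" unfolding CA_def join_alg_def
  using saC saA sets.sets_into_space by (intro sigma_algebra_sigma_sets) blast
lemma CB_sa: "sigma_algebra (space M) CB" unfolding CB_def join_alg_def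
  using saC saB sets.sets_into_space by (intro sigma_algebra_sigma_sets) blast

lemma RM_space: "space RM = Xstar M" and RM_sets: "sets RM = sigma_sets (Xstar M) (susp_alg M CA \<union> susp_alg M CB)"
  unfolding RM_def using susp_alg_Pow[of M CA] susp_alg_Pow[of M CB] by auto

lemma meas_RM_A: "A \<in> CA \<Longrightarrow> (\<lambda>\<gamma>. \<gamma> A) \<in> borel_measurable RM"
proof (rule measurableI)
  fix S :: "ennreal set" assume "A \<in> CA" "S \<in> sets borel"
  then have "{\<gamma> \<in> Xstar M. \<gamma> A \<in> S} \<in> susp_alg M CA" by (rule susp_gen)
  then show "(\<lambda>\<gamma>. \<gamma> A) -` S \<inter> space RM \<in> sets RM"
    unfolding RM_sets RM_space by (auto simp: vimage_def Int_def conj_commute)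
qed auto

lemma CinCA: "C \<subseteq> CA" and ainCA: "\<alpha> \<subseteq> CA" and CinCB: "C \<subseteq> CB" and binCB: "\<beta> \<subseteq> CB"
  unfolding CA_def CB_def join_alg_def by auto

lemma crux:
  assumes F: "F \<in> C" "emeasure M F \<noteq> \<infinity>" and a: "a \<in> \<alpha>" and b: "b \<in> \<beta>"
  shows "aem P RM (\<lambda>\<gamma>. \<gamma> (F \<inter> a \<inter> b))"
proof -
  interpret prob_space P by (rule prob)
  have "\<forall>n::nat. \<exists>Q::nat \<Rightarrow> 'a set. (\<forall>i. Q i \<in> C) \<and> disjoint_family Q \<and> (\<Union>i. Q i) = F \<and>
            (\<forall>i. measure M (Q i) \<le> (1/2)^n)"
    using partition_small[OF saC nat F] by simp
  then obtain Q :: "nat \<Rightarrow> nat \<Rightarrow> 'a set" where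
    Q: "\<And>n i. Q n i \<in> C" "\<And>n. disjoint_family (Q n)" "\<And>n. (\<Union>i. Q n i) = F"
       "\<And>n i. measure M (Q n i) \<le> (1/2)^n"
    by metis
  have FM: "F \<in> sets M" using F saC by auto
  have QM: "Q n i \<in> sets M" for n i using Q(1) saC by auto
  have QF: "Q n i \<subseteq> F" for n i using Q(3)[of n] by blast
  have Qfin: "emeasure M (Q n i) \<noteq> \<infinity>" for n i
    using F(2) emeasure_mono[OF QF FM] neq_top_trans[of "emeasure M F" "emeasure M (Q n i)"] by simp
  have aM: "a \<in> sets M" and bM: "b \<in> sets M" using a b saA saB by auto
  interpret CAs: sigma_algebra "space M" CA by (rule CA_sa)
  interpret CBs: sigma_algebra "space M" CB by (rule CB_sa)
  have QaCA: "Q n i \<inter> a \<in> CA" for n i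
    using Q(1)[of n i] a CinCA ainCA by (intro CAs.Int) auto
  have QbCB: "Q n i \<inter> b \<in> CB" for n i
    using Q(1)[of n i] b CinCB binCB by (intro CBs.Int) auto
  have meas_RM_B: "(\<lambda>\<gamma>. \<gamma> A) \<in> borel_measurable RM" if "A \<in> CB" for A
  proof (rule measurableI)
    fix S :: "ennreal set" assume "S \<in> sets borel"
    with that have "{\<gamma> \<in> Xstar M. \<gamma> A \<in> S} \<in> susp_alg M CB" by (rule susp_gen)
    then show "(\<lambda>\<gamma>. \<gamma> A) -` S \<inter> space RM \<in> sets RM"
      unfolding RM_sets RM_space by (auto simp: vimage_def Int_def conj_commute)
  qed auto
  define h where "h n \<gamma> = (\<Sum>i. min (\<gamma> (Q n i \<inter> a)) (\<gamma> (Q n i \<inter> b)))" for n and \<gamma> :: "'a set \<Rightarrow> ennreal"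
  have hm: "h n \<in> borel_measurable RM" for n
  proof -
    have [measurable]: "(\<lambda>\<gamma>. \<gamma> (Q n i \<inter> a)) \<in> borel_measurable RM" for i using meas_RM_A[OF QaCA] .
    have [measurable]: "(\<lambda>\<gamma>. \<gamma> (Q n i \<inter> b)) \<in> borel_measurable RM" for i using meas_RM_B[OF QbCB] .
    show ?thesis unfolding h_def by measurable
  qed
  define B where "B n = (\<Union>i. {\<gamma> \<in> space P. 1 < \<gamma> (Q n i)})" for n
  have Bi: "{\<gamma> \<in> space P. 1 < \<gamma> (Q n i)} \<in> sets P" for n i
    using meas_set[OF QM, of "{1<..}"] by simp
  have BP: "B n \<in> sets P" for n unfolding B_def using Bi by blast
  have Bm: "measure P (B n) \<le> measure M F * (1/2)^n" for n
  proof -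
    have "emeasure P (B n) \<le> (\<Sum>i. emeasure P {\<gamma> \<in> space P. 1 < \<gamma> (Q n i)})"
      unfolding B_def using Bi by (intro emeasure_subadditive_countably) auto
    also have "\<dots> \<le> (\<Sum>i. ennreal ((1/2)^n) * emeasure M (Q n i))"
    proof (intro suminf_le allI)
      fix i
      have "measure P {\<gamma> \<in> space P. 1 < \<gamma> (Q n i)} \<le> (measure M (Q n i))^2"
        by (rule prob_ge2[OF QM Qfin])
      also have "\<dots> \<le> (1/2)^n * measure M (Q n i)"
        unfolding power2_eq_square by (intro mult_right_mono Q(4)) auto
      finally have "ennreal (measure P {\<gamma> \<in> space P. 1 < \<gamma> (Q n i)}) \<le> ennreal ((1/2)^n * measure M (Q n i))"
        by (rule ennreal_leI)
      then show "emeasure P {\<gamma> \<in> space P. 1 < \<gamma> (Q n i)} \<le> ennreal ((1/2)^n) * emeasure M (Q n i)"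
        using emeasure_eq_ennreal_measure[of M "Q n i"] Qfin[of n i] by (simp add: emeasure_eq_measure ennreal_mult)
    qed auto
    also have "\<dots> = ennreal ((1/2)^n) * emeasure M F"
    proof -
      have r: "range (Q n) \<subseteq> sets M" using QM by auto
      have "(\<Sum>i. emeasure M (Q n i)) = emeasure M F"
        using suminf_emeasure[OF r Q(2)[of n]] Q(3)[of n] by simp
      then show ?thesis by simp
    qed
    also have "\<dots> = ennreal (measure M F * (1/2)^n)"
      using emeasure_eq_ennreal_measure[of M F] F(2) by (simp add: ennreal_mult mult.commute)
    finally show ?thesis by (simp add: emeasure_eq_measure ennreal_le_iff)
  qed
  have "summable (\<lambda>n. measure P (B n))"
  proof (rule summable_comparison_test)
    show "\<exists>N. \<forall>n\<ge>N. norm (measure P (B n)) \<le> measure M F * (1/2)^n" using Bm by auto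
    show "summable (\<lambda>n. measure M F * (1/2::real)^n)" by (intro summable_mult summable_geometric) auto
  qed
  then have AEev: "AE \<gamma> in P. eventually (\<lambda>n. \<gamma> \<in> space P - B n) sequentially"
    using BP by (intro borel_cantelli_AE1) (auto simp: less_top[symmetric])
  have "AE \<gamma> in P. eventually (\<lambda>n. h n \<gamma> = \<gamma> (F \<inter> a \<inter> b)) sequentially"
    using AEev
  proof eventually_elim
    case (elim \<gamma>)
    then show ?case
    proof (rule eventually_mono)
      fix n assume g: "\<gamma> \<in> space P - B n"
      then have gX: "\<gamma> \<in> Xstar M" by (simp add: spP)
      have le1: "\<gamma> (Q n i) \<le> 1" for i using g unfolding B_def by (auto simp: not_less)
      have "\<gamma> (F \<inter> a \<inter> b) = \<gamma> (\<Union>i. Q n i \<inter> a \<inter> b)" using Q(3)[of n] by (simp add: UN_extend_simps(4) Int_assoc)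
      also have "\<dots> = (\<Sum>i. \<gamma> (Q n i \<inter> a \<inter> b))"
      proof (rule gam_suminf[OF gX, symmetric])
        show "range (\<lambda>i. Q n i \<inter> a \<inter> b) \<subseteq> sets M" using QM aM bM by auto
        show "disjoint_family (\<lambda>i. Q n i \<inter> a \<inter> b)"
          using Q(2)[of n] unfolding disjoint_family_on_def by blast
      qed
      also have "\<dots> = h n \<gamma>" unfolding h_def using gam_min[OF gX QM aM bM le1] by simp
      finally show "h n \<gamma> = \<gamma> (F \<inter> a \<inter> b)" by simp
    qed
  qed
  then show ?thesis by (rule aem_ev[OF hm])
qed

end



context PS2
begin

definition "Pi3 = {c \<inter> a \<inter> b | c a b. c \<in> C \<and> a \<in> \<alpha> \<and> b \<in> \<beta>}"

lemma Pi3_Int: "Int_stable Pi3"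
  unfolding Int_stable_def Pi3_def
proof (intro ballI)
  interpret Cs: sigma_algebra "space M" C by (rule saC(1))
  interpret As: sigma_algebra "space M" \<alpha> by (rule saA(1))
  interpret Bs: sigma_algebra "space M" \<beta> by (rule saB(1))
  fix x y assume "x \<in> {c \<inter> a \<inter> b |c a b. c \<in> C \<and> a \<in> \<alpha> \<and> b \<in> \<beta>}" "y \<in> {c \<inter> a \<inter> b |c a b. c \<in> C \<and> a \<in> \<alpha> \<and> b \<in> \<beta>}"
  then obtain c a b c' a' b' where x: "x = c \<inter> a \<inter> b" "c \<in> C" "a \<in> \<alpha>" "b \<in> \<beta>"
    and y: "y = c' \<inter> a' \<inter> b'" "c' \<in> C" "a' \<in> \<alpha>" "b' \<in> \<beta>" by blast
  have "x \<inter> y = (c \<inter> c') \<inter> (a \<inter> a') \<inter> (b \<inter> b')" using x y by blast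
  moreover have "c \<inter> c' \<in> C" "a \<inter> a' \<in> \<alpha>" "b \<inter> b' \<in> \<beta>" using x y by auto
  ultimately show "x \<inter> y \<in> {c \<inter> a \<inter> b |c a b. c \<in> C \<and> a \<in> \<alpha> \<and> b \<in> \<beta>}" by blast
qed

lemma Pi3_Pow: "Pi3 \<subseteq> Pow (space M)"
  unfolding Pi3_def using saC(2) sets.sets_into_space by blast

lemma Pi3_sets: "sigma_sets (space M) Pi3 \<subseteq> sets M"
proof -
  interpret Ms: sigma_algebra "space M" "sets M" by (rule sets.sigma_algebra_axioms)
  have "Pi3 \<subseteq> sets M" unfolding Pi3_def using saC(2) saA(2) saB(2) by blast
  then show ?thesis by (rule sets.sigma_sets_subset)
qed

lemma dynkin_part:
  assumes E: "E \<in> C" "emeasure M E \<noteq> \<infinity>" and A: "A \<in> sigma_sets (space M) Pi3"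
  shows "aem P RM (\<lambda>\<gamma>. \<gamma> (A \<inter> E))"
  using Pi3_Int Pi3_Pow A
proof (induction rule: sigma_sets_induct_disjoint)
  case (basic A)
  then obtain c a b where A: "A = c \<inter> a \<inter> b" "c \<in> C" "a \<in> \<alpha>" "b \<in> \<beta>" unfolding Pi3_def by blast
  interpret Cs: sigma_algebra "space M" C by (rule saC(1))
  have cE: "c \<inter> E \<in> C" using A(2) E(1) by auto
  have EM: "E \<in> sets M" using E saC by auto
  have "emeasure M (c \<inter> E) \<noteq> \<infinity>"
    using E(2) emeasure_mono[of "c \<inter> E" E M] EM neq_top_trans[of "emeasure M E" "emeasure M (c \<inter> E)"] by auto
  from crux[OF cE this A(3) A(4)] have "aem P RM (\<lambda>\<gamma>. \<gamma> (c \<inter> E \<inter> a \<inter> b))" .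
  moreover have "c \<inter> E \<inter> a \<inter> b = A \<inter> E" using A by blast
  ultimately show ?case by simp
next
  case empty
  have "aem P RM (\<lambda>\<gamma>. 0)" by (rule aem_meas) simp
  moreover have "AE \<gamma> in P. 0 = \<gamma> ({} \<inter> E)" by (auto simp: spP gam_empty)
  ultimately show ?case by (rule aem_cong)
next
  case (compl A)
  have EM: "E \<in> sets M" using E saC by auto
  have AM: "A \<in> sets M" using compl(1) Pi3_sets by auto
  have "aem P RM (\<lambda>\<gamma>. \<gamma> E)" using E(1) CinCA by (intro aem_meas meas_RM_A) auto
  from aem_diff[OF this compl(2)] have "aem P RM (\<lambda>\<gamma>. \<gamma> E - \<gamma> (A \<inter> E))" .
  moreover have "AE \<gamma> in P. \<gamma> E - \<gamma> (A \<inter> E) = \<gamma> ((space M - A) \<inter> E)"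
    using AE_fin[OF EM E(2)] AE_space
  proof eventually_elim
    case (elim \<gamma>)
    show ?case
    proof -
      have g: "\<gamma> \<in> Xstar M" using elim(2) by (simp add: spP)
      have le: "\<gamma> (A \<inter> E) \<le> \<gamma> E" using AM EM by (intro gam_mono[OF g]) auto
      then have fin: "\<gamma> (A \<inter> E) \<noteq> \<infinity>" using elim(1) neq_top_trans[of "\<gamma> E" "\<gamma> (A \<inter> E)"] by simp
      have un: "(space M - A) \<inter> E \<union> A \<inter> E = E" using EM sets.sets_into_space by blast
      have "\<gamma> ((space M - A) \<inter> E) + \<gamma> (A \<inter> E) = \<gamma> E"
        using gam_add[OF g, of "(space M - A) \<inter> E" "A \<inter> E"] AM EM unfolding un by auto
      then show ?thesis using fin ennreal_add_diff_cancel_right[of "\<gamma> (A \<inter> E)" "\<gamma> ((space M - A) \<inter> E)"] by simp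
    qed
  qed
  ultimately show ?case by (rule aem_cong)
next
  case (union A)
  have AM: "range A \<subseteq> sets M" using union(2) Pi3_sets by auto
  have EM: "E \<in> sets M" using E saC by auto
  have "aem P RM (\<lambda>\<gamma>. \<Sum>i. \<gamma> (A i \<inter> E))" using union(3) by (rule aem_suminf)
  moreover have "AE \<gamma> in P. (\<Sum>i. \<gamma> (A i \<inter> E)) = \<gamma> ((\<Union>i. A i) \<inter> E)"
  proof (rule AE_I2)
    fix \<gamma> assume "\<gamma> \<in> space P"
    then have g: "\<gamma> \<in> Xstar M" by (simp add: spP)
    have "(\<Sum>i. \<gamma> (A i \<inter> E)) = \<gamma> (\<Union>i. A i \<inter> E)"
    proof (rule gam_suminf[OF g])
      show "range (\<lambda>i. A i \<inter> E) \<subseteq> sets M" using AM EM by auto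
      show "disjoint_family (\<lambda>i. A i \<inter> E)" using union(1) unfolding disjoint_family_on_def by blast
    qed
    then show "(\<Sum>i. \<gamma> (A i \<inter> E)) = \<gamma> ((\<Union>i. A i) \<inter> E)" by simp
  qed
  ultimately show ?case by (rule aem_cong)
qed

end



context PS2
begin

lemma L_sub_Pi3: "join_alg M (join_alg M C \<alpha>) \<beta> \<subseteq> sigma_sets (space M) Pi3"
proof -
  interpret Cs: sigma_algebra "space M" C by (rule saC(1))
  interpret As: sigma_algebra "space M" \<alpha> by (rule saA(1))
  interpret Bs: sigma_algebra "space M" \<beta> by (rule saB(1))
  have sp: "space M \<in> C" "space M \<in> \<alpha>" "space M \<in> \<beta>" by auto
  have CP: "C \<subseteq> Pi3" unfolding Pi3_def
  proof
    fix c assume c: "c \<in> C"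
    then have "c = c \<inter> space M \<inter> space M" using Cs.sets_into_space by blast
    then show "c \<in> {c \<inter> a \<inter> b |c a b. c \<in> C \<and> a \<in> \<alpha> \<and> b \<in> \<beta>}" using c sp by blast
  qed
  have AP: "\<alpha> \<subseteq> Pi3" unfolding Pi3_def
  proof
    fix a assume a: "a \<in> \<alpha>"
    then have "a = space M \<inter> a \<inter> space M" using As.sets_into_space by blast
    then show "a \<in> {c \<inter> a \<inter> b |c a b. c \<in> C \<and> a \<in> \<alpha> \<and> b \<in> \<beta>}" using a sp by blast
  qed
  have BP: "\<beta> \<subseteq> Pi3" unfolding Pi3_def
  proof
    fix b assume b: "b \<in> \<beta>"
    then have "b = space M \<inter> space M \<inter> b" using Bs.sets_into_space by blast
    then show "b \<in> {c \<inter> a \<inter> b |c a b. c \<in> C \<and> a \<in> \<alpha> \<and> b \<in> \<beta>}" using b sp by blast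
  qed
  have "sigma_sets (space M) (C \<union> \<alpha>) \<subseteq> sigma_sets (space M) Pi3"
    using CP AP by (intro sigma_sets_subseteq) auto
  moreover have "\<beta> \<subseteq> sigma_sets (space M) Pi3" using BP by auto
  ultimately show ?thesis unfolding join_alg_def by (intro sigma_sets_mono) auto
qed

lemma all_aem:
  assumes A: "A \<in> join_alg M (join_alg M C \<alpha>) \<beta>"
  shows "aem P RM (\<lambda>\<gamma>. \<gamma> A)"
proof -
  interpret Cs: sigma_algebra "space M" C by (rule saC(1))
  have A3: "A \<in> sigma_sets (space M) Pi3" using A L_sub_Pi3 by auto
  have AM: "A \<in> sets M" using A3 Pi3_sets by auto
  obtain K where K: "countable K" "K \<subseteq> C" "\<Union>K = space M" "\<forall>k\<in>K. emeasure M k \<noteq> \<infinity>"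
    using sfin unfolding sigma_finite_on_def by blast
  define K' where "K' = insert {} K"
  have K': "countable K'" "K' \<noteq> {}" "K' \<subseteq> C" "\<Union>K' = space M" "\<forall>k\<in>K'. emeasure M k \<noteq> \<infinity>"
    using K unfolding K'_def by auto
  define E where "E = from_nat_into K'"
  have rE: "range E = K'" unfolding E_def using K' by simp
  define D where "D = disjointed E"
  have DC: "D i \<in> C" for i
    using Cs.range_disjointed_sets[of E] rE K'(3) unfolding D_def by auto
  have Dfin: "emeasure M (D i) \<noteq> \<infinity>" for i
  proof -
    have "E i \<in> K'" using rE by auto
    then have "emeasure M (E i) \<noteq> \<infinity>" "E i \<in> sets M" using K'(3,5) saC(2) by auto
    moreover have "D i \<subseteq> E i" unfolding D_def by (rule disjointed_subset)
    ultimately show ?thesis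
      using emeasure_mono[of "D i" "E i" M] neq_top_trans[of "emeasure M (E i)" "emeasure M (D i)"] by auto
  qed
  have Dd: "disjoint_family D" unfolding D_def by (rule disjoint_family_disjointed)
  have DU: "(\<Union>i. D i) = space M" unfolding D_def UN_disjointed_eq using rE K'(4) by simp
  have DM: "D i \<in> sets M" for i using DC saC(2) by auto
  have "aem P RM (\<lambda>\<gamma>. \<Sum>i. \<gamma> (A \<inter> D i))"
    using dynkin_part[OF DC Dfin A3] by (intro aem_suminf)
  moreover have "AE \<gamma> in P. (\<Sum>i. \<gamma> (A \<inter> D i)) = \<gamma> A"
  proof (rule AE_I2)
    fix \<gamma> assume "\<gamma> \<in> space P"
    then have g: "\<gamma> \<in> Xstar M" by (simp add: spP)
    have "(\<Sum>i. \<gamma> (A \<inter> D i)) = \<gamma> (\<Union>i. A \<inter> D i)"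
    proof (rule gam_suminf[OF g])
      show "range (\<lambda>i. A \<inter> D i) \<subseteq> sets M" using AM DM by auto
      show "disjoint_family (\<lambda>i. A \<inter> D i)" using Dd unfolding disjoint_family_on_def by blast
    qed
    moreover have "(\<Union>i. A \<inter> D i) = A" using DU AM sets.sets_into_space by blast
    ultimately show "(\<Sum>i. \<gamma> (A \<inter> D i)) = \<gamma> A" by simp
  qed
  ultimately show ?thesis by (rule aem_cong)
qed

abbreviation "RR \<equiv> sigma_sets (Xstar M) (susp_alg M CA \<union> susp_alg M CB)"

lemma RR_sets: "RR \<subseteq> sets P"
proof -
  have "susp_alg M CA \<union> susp_alg M CB \<subseteq> susp_alg M (sets M)"
    using susp_alg_sub[OF CA_sub] susp_alg_sub[OF CB_sub] by auto
  then have "RR \<subseteq> sigma_sets (Xstar M) (susp_alg M (sets M))"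
    by (rule sigma_sets_subseteq)
  also have "\<dots> = susp_alg M (sets M)"
    unfolding susp_alg_def by (rule sigma_sets_sigma_sets_eq) auto
  finally show ?thesis by (simp add: setsP)
qed

lemma goodI: "X \<in> sets P \<Longrightarrow> Y \<in> RR \<Longrightarrow> (X - Y) \<union> (Y - X) \<in> null_sets P \<Longrightarrow>
    X \<in> sets P \<and> (\<exists>Y\<in>RR. (X - Y) \<union> (Y - X) \<in> null_sets P)"
  by blast

lemma good:
  assumes X: "X \<in> susp_alg M (join_alg M (join_alg M C \<alpha>) \<beta>)"
  shows "X \<in> sets P \<and> (\<exists>Y\<in>RR. (X - Y) \<union> (Y - X) \<in> null_sets P)"
  using X[unfolded susp_alg_def]
proof (induction rule: sigma_sets.induct)
  case (Basic X)
  then obtain A S where XA: "X = {\<gamma> \<in> Xstar M. \<gamma> A \<in> S}" "A \<in> join_alg M (join_alg M C \<alpha>) \<beta>" "S \<in> sets borel"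
    by blast
  have AM: "A \<in> sets M" using XA(2) L_sub_Pi3 Pi3_sets by auto
  have XP: "X \<in> sets P" using meas_set[OF AM XA(3)] XA(1) by (simp add: spP)
  obtain g where g: "g \<in> borel_measurable RM" "AE \<gamma> in P. \<gamma> A = g \<gamma>"
    using all_aem[OF XA(2)] unfolding aem_def by blast
  define Y where "Y = g -` S \<inter> space RM"
  have YR: "Y \<in> RR" unfolding Y_def using measurable_sets[OF g(1) XA(3)] by (simp add: RM_sets)
  have YP: "Y \<in> sets P" using YR RR_sets by auto
  from g(2) obtain N where N: "{\<gamma> \<in> space P. \<not> \<gamma> A = g \<gamma>} \<subseteq> N" "emeasure P N = 0" "N \<in> sets P"
    by (rule AE_E)
  have sub: "(X - Y) \<union> (Y - X) \<subseteq> N" using N(1) unfolding XA(1) Y_def by (auto simp: RM_space spP)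
  have NN: "N \<in> null_sets P" using N(2,3) by (rule null_setsI)
  have DP: "(X - Y) \<union> (Y - X) \<in> sets P" using XP YP by (intro sets.Un sets.Diff)
  have "(X - Y) \<union> (Y - X) \<in> null_sets P"
    by (rule null_sets_subset[OF NN DP sub])
  then show ?case by (rule goodI[OF XP YR])
next
  case Empty
  have "{} \<in> RR" by (rule sigma_sets.Empty)
  then show ?case by (intro goodI) auto
next
  case (Compl X)
  then obtain Y where Y: "Y \<in> RR" "(X - Y) \<union> (Y - X) \<in> null_sets P" and XP: "X \<in> sets P" by blast
  have XO: "X \<subseteq> Xstar M" using XP sets.sets_into_space[of X P] by (simp add: spP)
  have YO: "Y \<subseteq> Xstar M" using Y(1) RR_sets sets.sets_into_space[of Y P] by (auto simp: spP)
  have "space P - X \<in> sets P" by (rule sets.compl_sets[OF XP])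
  then have c1: "Xstar M - X \<in> sets P" by (simp add: spP)
  have c2: "Xstar M - Y \<in> RR" using Y(1) by (rule sigma_sets.Compl)
  have "((Xstar M - X) - (Xstar M - Y)) \<union> ((Xstar M - Y) - (Xstar M - X)) = (X - Y) \<union> (Y - X)"
    using XO YO by blast
  then have c3: "((Xstar M - X) - (Xstar M - Y)) \<union> ((Xstar M - Y) - (Xstar M - X)) \<in> null_sets P"
    using Y(2) by simp
  show ?case by (rule goodI[OF c1 c2 c3])
next
  case (Union X)
  then have "\<forall>i. \<exists>Y. Y \<in> RR \<and> (X i - Y) \<union> (Y - X i) \<in> null_sets P" by blast
  from choice[OF this] obtain Y where Y: "\<forall>i. Y i \<in> RR \<and> (X i - Y i) \<union> (Y i - X i) \<in> null_sets P" by blast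
  have "\<And>i. X i \<in> sets P" using Union by blast
  then have XP: "(\<Union>i. X i) \<in> sets P" by (intro sets.countable_UN') auto
  have YR: "(\<Union>i. Y i) \<in> RR" using Y by (intro sigma_sets.Union) auto
  have YP: "(\<Union>i. Y i) \<in> sets P" using YR RR_sets by auto
  have nu: "(\<Union>i. (X i - Y i) \<union> (Y i - X i)) \<in> null_sets P" using Y by (intro null_sets_UN) auto
  have sub: "((\<Union>i. X i) - (\<Union>i. Y i)) \<union> ((\<Union>i. Y i) - (\<Union>i. X i)) \<subseteq> (\<Union>i. (X i - Y i) \<union> (Y i - X i))"
    by blast
  have DP: "((\<Union>i. X i) - (\<Union>i. Y i)) \<union> ((\<Union>i. Y i) - (\<Union>i. X i)) \<in> sets P"
    using XP YP by (intro sets.Un sets.Diff)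
  have "((\<Union>i. X i) - (\<Union>i. Y i)) \<union> ((\<Union>i. Y i) - (\<Union>i. X i)) \<in> null_sets P"
    by (rule null_sets_subset[OF nu DP sub])
  then show ?case by (rule goodI[OF XP YR])
qed

end


theorem lemma2p3:
  fixes M :: "'a::polish_space measure"
    and P :: "('a set \<Rightarrow> ennreal) measure"
    and \<alpha> \<beta> C :: "'a set set"
  assumes "sets M = sets borel"
    and "sigma_finite_measure M"
    and "sub_sigma_algebra_of M \<alpha>" and "sub_sigma_algebra_of M \<beta>" and "sub_sigma_algebra_of M C"
    and "sigma_finite_on M C" and "non_atomic_on M C"
    and "is_poisson_suspension M P"
  shows "eq_mod P
           (susp_alg M (join_alg M (join_alg M C \<alpha>) \<beta>))
           (join_alg_star (space P) (susp_alg M (join_alg M C \<alpha>)) (susp_alg M (join_alg M C \<beta>)))"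
proof -
  interpret PS2 M P C \<alpha> \<beta>
    using assms by unfold_locales auto
  have Req: "join_alg_star (space P) (susp_alg M (join_alg M C \<alpha>)) (susp_alg M (join_alg M C \<beta>)) = RR"
    unfolding join_alg_star_def spP CA_def CB_def ..
  have CAL: "CA \<subseteq> join_alg M (join_alg M C \<alpha>) \<beta>"
    unfolding CA_def join_alg_def by auto
  have CBL: "CB \<subseteq> join_alg M (join_alg M C \<alpha>) \<beta>"
  proof -
    have "C \<union> \<beta> \<subseteq> join_alg M C \<alpha> \<union> \<beta>" using CinCA unfolding CA_def by auto
    then show ?thesis unfolding CB_def join_alg_def[of M C \<beta>] join_alg_def[of M "join_alg M C \<alpha>" \<beta>]
      by (rule sigma_sets_subseteq)
  qed
  have RL: "RR \<subseteq> susp_alg M (join_alg M (join_alg M C \<alpha>) \<beta>)"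
  proof -
    have "susp_alg M CA \<union> susp_alg M CB \<subseteq> susp_alg M (join_alg M (join_alg M C \<alpha>) \<beta>)"
      using susp_alg_sub[OF CAL] susp_alg_sub[OF CBL] by auto
    then show ?thesis unfolding susp_alg_def[of M "join_alg M (join_alg M C \<alpha>) \<beta>"]
      by (rule sigma_sets_mono)
  qed
  have E: "{} \<in> null_sets P" by (rule null_setsI) auto
  show ?thesis
    unfolding eq_mod_def Req
  proof (intro conjI ballI)
    fix A assume "A \<in> susp_alg M (join_alg M (join_alg M C \<alpha>) \<beta>)"
    then show "\<exists>B\<in>RR. (A - B) \<union> (B - A) \<in> null_sets P" using good by blast
  next
    fix B assume "B \<in> RR"
    then have "B \<in> susp_alg M (join_alg M (join_alg M C \<alpha>) \<beta>)" using RL by auto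
    moreover have "(B - B) \<union> (B - B) \<in> null_sets P" using E by simp
    ultimately show "\<exists>A\<in>susp_alg M (join_alg M (join_alg M C \<alpha>) \<beta>). (A - B) \<union> (B - A) \<in> null_sets P"
      by blast
  qed
qed

end
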